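(* Let $\nu,m_1,m_2,t$ be positive integers with $\nu>m_i\ge t+1$ for $i\in\{1,2\}$. Then $$c_1(\nu,m_1,m_2,t)>s_0(\nu,m_1,m_2+1,t)\,N'(t;m_2;2\nu).$$ Moreover, if additionally $2\nu\ge m_1+2m_2-t+4$, then $$c_1(\nu,m_1,m_2,t)>\left({m_2-t+1\brack 1}-q^{-2}\right)N'(t+1;m_1;2\nu)\,N'(t;m_2;2\nu).$$
   Context: Let $q$ be a prime power, $\nu\ge 1$ an integer, and $f$ a non-degenerate alternating bilinear form on $V=\mathbb F_q^{2\nu}$. A subspace $W\le V$ is totally isotropic if $f(x,y)=0$ for all $x,y\in W$. For $0\le m\le \nu$, $\mathcal P_m$ denotes the set of all $m$-dimensional totally isotropic subspaces of $V$; ${A\brack k}$ is the set of $k$-dimensional subspaces of a subspace $A$. Gaussian binomial coefficient: ${n\brack k}=\prod_{i=0}^{k-1}\frac{q^{n-i}-1}{q^{k-i}-1}$, ${n\brack 0}=1$, ${n\brack k}=0$ for $k<0$. For integers $0\le a\le m\le\nu$, $N'(a;m;2\nu)=\prod_{i=1}^{m-a}\frac{q^{2(\nu-m+i)}-1}{q^{i}-1}$ (the number of members of $\mathcal P_m$ containing a fixed member of $\mathcal P_a$). For $M\in\mathcal P_{m_2+1}$ and a $t$-dimensional subspace $T\subseteq M$ let $\mathcal C_1(M,T;m_1,t)=\{F\in\mathcal P_{m_1}: T\subseteq F,\ \dim(F\cap M)\ge t+1\}$ and $\mathcal C_2(M,T;m_2)=\{F\in\mathcal P_{m_2}: T\subseteq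 F\}\cup{M\brack m_2}$. The product $|\mathcal C_1(M,T;m_1,t)|\cdot|\mathcal C_2(M,T;m_2)|$ does not depend on the choice of $M,T$; it is denoted $c_1(\nu,m_1,m_2,t)$. Also $s_0(\nu,m,s,t)={s-t\brack 1}N'(t+1;m;2\nu)-q{s-t\brack 2}N'(t+2;m;2\nu)$. *)

theory Defs
  imports "HOL-Analysis.Analysis"
begin

text \<open>Vectors of V = F_q^(2 nu) are modelled as 'a^'n with 'a a finite field
  (so q = CARD('a) is a prime power) and CARD('n) = 2 nu.\<close>

definition alt_bilinear :: "('a::field^'n \<Rightarrow> 'a^'n \<Rightarrow> 'a) \<Rightarrow> bool" where
  "alt_bilinear f \<longleftrightarrow>
     (\<forall>x y z. f (x + y) z = f x z + f y z) \<and>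
     (\<forall>x y z. f x (y + z) = f x y + f x z) \<and>
     (\<forall>c x y. f (c *s x) y = c * f x y) \<and>
     (\<forall>c x y. f x (c *s y) = c * f x y) \<and>
     (\<forall>x. f x x = 0)"

definition nondegenerate :: "('a::field^'n \<Rightarrow> 'a^'n \<Rightarrow> 'a) \<Rightarrow> bool" where
  "nondegenerate f \<longleftrightarrow> (\<forall>x. (\<forall>y. f x y = 0) \<longrightarrow> x = 0)"

definition totally_isotropic :: "('a::field^'n \<Rightarrow> 'a^'n \<Rightarrow> 'a) \<Rightarrow> ('a^'n) set \<Rightarrow> bool" where
  "totally_isotropic f W \<longleftrightarrow> vec.subspace W \<and> (\<forall>x\<in>W. \<forall>y\<in>W. f x y = 0)"

definition Pm :: "('a::field^'n \<Rightarrow> 'a^'n \<Rightarrow> 'a) \<Rightarrow> nat \<Rightarrow> ('a^'n) set set" where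
  "Pm f m = {W. totally_isotropic f W \<and> vec.dim W = m}"

definition subspaces_of :: "('a::field^'n) set \<Rightarrow> nat \<Rightarrow> ('a^'n) set set" where
  "subspaces_of A k = {B. vec.subspace B \<and> B \<subseteq> A \<and> vec.dim B = k}"

definition C1 :: "('a::field^'n \<Rightarrow> 'a^'n \<Rightarrow> 'a) \<Rightarrow> ('a^'n) set \<Rightarrow> ('a^'n) set \<Rightarrow> nat \<Rightarrow> nat
                    \<Rightarrow> ('a^'n) set set" where
  "C1 f M T m1 t = {F \<in> Pm f m1. T \<subseteq> F \<and> vec.dim (F \<inter> M) \<ge> t + 1}"

definition C2 :: "('a::field^'n \<Rightarrow> 'a^'n \<Rightarrow> 'a) \<Rightarrow> ('a^'n) set \<Rightarrow> ('a^'n) set \<Rightarrow> nat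
                    \<Rightarrow> ('a^'n) set set" where
  "C2 f M T m2 = {F \<in> Pm f m2. T \<subseteq> F} \<union> subspaces_of M m2"

definition gbinom :: "real \<Rightarrow> nat \<Rightarrow> nat \<Rightarrow> real" where
  "gbinom q n k = (\<Prod>i<k. (q ^ (n - i) - 1) / (q ^ (k - i) - 1))"

text \<open>N'(a;m;2nu); taken to be 0 when a > m (no member of P_m contains a member of P_a).\<close>
definition Nprime :: "real \<Rightarrow> nat \<Rightarrow> nat \<Rightarrow> nat \<Rightarrow> real" where
  "Nprime q a m \<nu> = (if a \<le> m then (\<Prod>i=1..m-a. (q ^ (2 * (\<nu> - m + i)) - 1) / (q ^ i - 1)) else 0)"

definition s0 :: "real \<Rightarrow> nat \<Rightarrow> nat \<Rightarrow> nat \<Rightarrow> nat \<Rightarrow> real" where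
  "s0 q \<nu> m s t = gbinom q (s - t) 1 * Nprime q (t + 1) m \<nu>
                   - q * gbinom q (s - t) 2 * Nprime q (t + 2) m \<nu>"

end

theory Submission
  imports Defs
begin


lemma card_span_insert:
  fixes A :: "('a::{finite,field}^'n) set"
  assumes A: "vec.subspace A" and v: "v \<notin> A"
  shows "card (vec.span (insert v A)) = CARD('a) * card A"
proof -
  have eq: "vec.span (insert v A) = (\<lambda>(c,x). c *s v + x) ` (UNIV \<times> A)"
  proof (intro set_eqI iffI)
    fix y assume "y \<in> vec.span (insert v A)"
    have sA: "vec.span A = A" using A by simp
    obtain k where "y - k *s v \<in> vec.span A" using vec.span_breakdown_eq[of y v A] \<open>y \<in> vec.span (insert v A)\<close> by blast
    then have "y - k *s v \<in> A" using sA by simp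
    then show "y \<in> (\<lambda>(c,x). c *s v + x) ` (UNIV \<times> A)"
      by (intro image_eqI[of _ _ "(k, y - k *s v)"]) auto
  next
    fix y assume "y \<in> (\<lambda>(c,x). c *s v + x) ` (UNIV \<times> A)"
    then obtain c x where "x \<in> A" "y = c *s v + x" by auto
    then show "y \<in> vec.span (insert v A)"
    proof -
      have "v \<in> vec.span (insert v A)" by (rule vec.span_base) simp
      moreover have "x \<in> vec.span (insert v A)" using \<open>x \<in> A\<close> by (intro vec.span_base) simp
      ultimately show ?thesis using \<open>y = c *s v + x\<close> vec.span_add vec.span_scale by metis
    qed
  qed
  have inj: "inj_on (\<lambda>(c,x). c *s v + x) (UNIV \<times> A)"
  proof (rule inj_onI, clarify)
    fix c x c' x' assume x: "x \<in> A" "x' \<in> A" and e: "c *s v + x = c' *s v + x'"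
    have "(c - c') *s v = c *s v - c' *s v" by (rule vector_sub_rdistrib)
    also have "\<dots> = x' - x" using e by (metis add_diff_cancel_left add_diff_cancel_right diff_diff_eq2 add.commute)
    finally have "(c - c') *s v = x' - x" .
    show "c = c' \<and> x = x'"
    proof (cases "c = c'")
      case True then show ?thesis using e by simp
    next
      case False
      have "inverse (c - c') *s ((c - c') *s v) \<in> A"
        using \<open>(c - c') *s v = x' - x\<close> vec.subspace_diff[OF A x(2) x(1)] vec.subspace_scale[OF A] by metis
      then have "v \<in> A" using False by (simp only: vector_smult_assoc left_inverse right_minus_eq vector_smult_lid, simp)
      with v show ?thesis by simp
    qed
  qed
  have "card (vec.span (insert v A)) = card ((UNIV::'a set) \<times> A)"
    unfolding eq by (rule card_image[OF inj])
  then show ?thesis by (simp add: card_cartesian_product)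
qed

lemma card_span_indep:
  fixes B :: "('a::{finite,field}^'n) set"
  assumes "vec.independent B"
  shows "card (vec.span B) = CARD('a) ^ card B"
proof -
  have "finite B" by simp
  then show ?thesis using assms
  proof (induction B rule: finite_induct)
    case empty then show ?case by simp
  next
    case (insert x F)
    have xF: "x \<notin> vec.span F" "vec.independent F"
      using insert.prems insert.hyps vec.independent_insert[of x F] by (auto split: if_splits)
    have "vec.span (insert x F) = vec.span (insert x (vec.span F))"
    proof (subst vec.span_eq, intro conjI)
      show "insert x F \<subseteq> vec.span (insert x (vec.span F))"
        using vec.span_superset[of "insert x (vec.span F)"] vec.span_superset[of F] by blast
      show "insert x (vec.span F) \<subseteq> vec.span (insert x F)"
        using vec.span_superset[of "insert x F"] vec.span_mono[of F "insert x F"] by blast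
    qed
    then have "card (vec.span (insert x F)) = CARD('a) * card (vec.span F)"
      using card_span_insert[of "vec.span F" x] xF by simp
    then show ?case using insert xF by simp
  qed
qed

lemma card_subspace:
  fixes W :: "('a::{finite,field}^'n) set"
  assumes "vec.subspace W"
  shows "card W = CARD('a) ^ vec.dim W"
proof -
  obtain B where B: "B \<subseteq> W" "vec.independent B" "W \<subseteq> vec.span B" "card B = vec.dim W"
    using vec.basis_exists by blast
  have "vec.span B = W" using B assms vec.span_subspace by blast
  then show ?thesis using card_span_indep[OF B(2)] B(4) by simp
qed



lemma card_field_ge2: "CARD('a::{finite,field}) \<ge> 2"
proof -
  have "card {0::'a, 1} \<le> CARD('a)" by (rule card_mono) auto
  then show ?thesis by simp
qed

lemma dim_iff_card:
  fixes W :: "('a::{finite,field}^'n) set"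
  assumes "vec.subspace W"
  shows "vec.dim W = k \<longleftrightarrow> card W = CARD('a) ^ k"
  using card_subspace[OF assms] card_field_ge2[where 'a='a] by (simp add: power_inject_exp)

lemma span_insert_eq_subspace:
  fixes A :: "('a::{finite,field}^'n) set"
  assumes A: "vec.subspace A" and B: "vec.subspace B" and AB: "A \<subseteq> B"
    and c: "card B = CARD('a) * card A" and v: "v \<in> B" "v \<notin> A"
  shows "vec.span (insert v A) = B"
proof (rule card_subset_eq)
  show "finite B" by simp
  show "vec.span (insert v A) \<subseteq> B" using AB v B by (intro vec.span_minimal) auto
  show "card (vec.span (insert v A)) = card B" using card_span_insert[OF A v(2)] c by simp
qed

lemma count_ext:
  fixes A X :: "('a::{finite,field}^'n) set"
  assumes A: "vec.subspace A" and X: "vec.subspace X" and AX: "A \<subseteq> X"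
  shows "card {B. vec.subspace B \<and> A \<subseteq> B \<and> B \<subseteq> X \<and> card B = CARD('a) * card A}
           * (CARD('a) * card A - card A) = card X - card A"
proof -
  define E where "E = {B. vec.subspace B \<and> A \<subseteq> B \<and> B \<subseteq> X \<and> card B = CARD('a) * card A}"
  have XA: "X - A = (\<Union>B\<in>E. B - A)"
  proof (intro set_eqI iffI)
    fix v assume v: "v \<in> X - A"
    let ?B = "vec.span (insert v A)"
    have "?B \<subseteq> X" by (rule vec.span_minimal) (use v AX X in auto)
    moreover have "A \<subseteq> ?B" using vec.span_superset[of "insert v A"] by blast
    ultimately have "?B \<in> E" unfolding E_def using v card_span_insert[OF A, of v] by auto
    moreover have "v \<in> ?B - A" using v vec.span_superset[of "insert v A"] by auto
    ultimately show "v \<in> (\<Union>B\<in>E. B - A)" by blast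
  qed (auto simp: E_def)
  have disj: "\<forall>B\<in>E. \<forall>B'\<in>E. B \<noteq> B' \<longrightarrow> (B - A) \<inter> (B' - A) = {}"
  proof (intro ballI impI)
    fix B B' assume B: "B \<in> E" and B': "B' \<in> E" and ne: "B \<noteq> B'"
    show "(B - A) \<inter> (B' - A) = {}"
    proof (rule ccontr)
      assume "(B - A) \<inter> (B' - A) \<noteq> {}"
      then obtain v where v: "v \<in> B" "v \<in> B'" "v \<notin> A" by blast
      have "vec.span (insert v A) = B" using B v A by (intro span_insert_eq_subspace) (auto simp: E_def)
      moreover have "vec.span (insert v A) = B'" using B' v A by (intro span_insert_eq_subspace) (auto simp: E_def)
      ultimately show False using ne by simp
    qed
  qed
  have "card (X - A) = (\<Sum>B\<in>E. card (B - A))"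
    unfolding XA by (rule card_UN_disjoint) (use disj in auto)
  also have "\<dots> = (\<Sum>B\<in>E. CARD('a) * card A - card A)"
    by (rule sum.cong) (auto simp: E_def card_Diff_subset)
  also have "\<dots> = card E * (CARD('a) * card A - card A)" by simp
  finally show ?thesis using AX by (simp add: E_def card_Diff_subset)
qed

definition perp :: "('a::field^'n \<Rightarrow> 'a^'n \<Rightarrow> 'a) \<Rightarrow> ('a^'n) set \<Rightarrow> ('a^'n) set" where
  "perp f A = {x. \<forall>a\<in>A. f x a = 0}"

context
  fixes f :: "'a::{finite,field}^'n \<Rightarrow> 'a^'n \<Rightarrow> 'a"
  assumes ab: "alt_bilinear f"
begin

lemma f_add1: "f (x + y) z = f x z + f y z" using ab by (simp add: alt_bilinear_def)
lemma f_add2: "f x (y + z) = f x y + f x z" using ab by (simp add: alt_bilinear_def)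
lemma f_sc1: "f (c *s x) y = c * f x y" using ab by (simp add: alt_bilinear_def)
lemma f_sc2: "f x (c *s y) = c * f x y" using ab by (simp add: alt_bilinear_def)
lemma f_alt: "f x x = 0" using ab by (simp add: alt_bilinear_def)
lemma f_zero1: "f 0 y = 0"
proof -
  have "f 0 y = f 0 y + f 0 y" using f_add1[of 0 0 y] by (simp only: add_0_left)
  then show ?thesis by (metis add_cancel_right_right)
qed
lemma f_zero2: "f x 0 = 0"
proof -
  have "f x 0 = f x 0 + f x 0" using f_add2[of x 0 0] by (simp only: add_0_left)
  then show ?thesis by (metis add_cancel_right_right)
qed
lemma f_diff1: "f (x - y) z = f x z - f y z" using f_add1[of "x - y" y z] by simp
lemma f_skew: "f x y = - f y x"
proof -
  have "f (x + y) (x + y) = f x (x + y) + f y (x + y)" by (rule f_add1)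
  also have "\<dots> = (f x x + f x y) + (f y x + f y y)" by (simp only: f_add2)
  also have "\<dots> = f x y + f y x" by (simp add: f_alt)
  finally have "f x y + f y x = 0" by (simp add: f_alt)
  then show ?thesis by (metis add.commute neg_eq_iff_add_eq_0)
qed

lemma subspace_ker2: "vec.subspace {y. f x y = 0}"
  unfolding vec.subspace_def by (simp add: f_zero2 f_add2 f_sc2)

lemma subspace_perp: "vec.subspace (perp f A)"
  unfolding vec.subspace_def perp_def by (simp add: f_zero1 f_add1 f_sc1)

lemma perp_span: "A \<subseteq> vec.span B \<Longrightarrow> B \<subseteq> A \<Longrightarrow> x \<in> perp f A \<longleftrightarrow> (\<forall>b\<in>B. f x b = 0)"
proof
  assume "A \<subseteq> vec.span B" "B \<subseteq> A" "x \<in> perp f A" then show "\<forall>b\<in>B. f x b = 0" by (auto simp: perp_def)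
next
  assume AB: "A \<subseteq> vec.span B" and "\<forall>b\<in>B. f x b = 0"
  then have "vec.span B \<subseteq> {y. f x y = 0}" by (intro vec.span_minimal subspace_ker2) auto
  then show "x \<in> perp f A" using AB by (auto simp: perp_def)
qed

end

lemma card_coord:
  "card {y::'a::{finite,field}^'n. \<forall>i\<in>J. y$i = 0} = CARD('a) ^ (CARD('n) - card J)"
proof -
  define Z where "Z = {y::'a^'n. \<forall>i\<in>J. y$i = 0}"
  define g where "g = (\<lambda>y::'a^'n. restrict (vec_nth y) (-J))"
  have inj: "inj_on g Z"
  proof (rule inj_onI)
    fix x y assume xy: "x \<in> Z" "y \<in> Z" "g x = g y"
    show "x = y"
    proof (rule vec_eq_iff[THEN iffD2], rule allI)
      fix i show "x $ i = y $ i"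
      proof (cases "i \<in> J")
        case True then show ?thesis using xy by (simp add: Z_def)
      next
        case False then show ?thesis using fun_cong[OF xy(3), of i] by (simp add: g_def)
      qed
    qed
  qed
  have img: "g ` Z = PiE (-J) (\<lambda>_. UNIV)"
  proof (intro set_eqI iffI)
    fix \<phi> assume "\<phi> \<in> g ` Z" then show "\<phi> \<in> PiE (-J) (\<lambda>_. UNIV)" by (auto simp: g_def)
  next
    fix \<phi> :: "'n \<Rightarrow> 'a" assume p: "\<phi> \<in> PiE (-J) (\<lambda>_. UNIV)"
    let ?y = "\<chi> i. if i \<in> J then 0 else \<phi> i"
    have "?y \<in> Z" by (simp add: Z_def)
    moreover have "g ?y = \<phi>"
    proof
      fix i show "g ?y i = \<phi> i"
        using p by (cases "i \<in> J") (auto simp: g_def PiE_def extensional_def)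
    qed
    ultimately show "\<phi> \<in> g ` Z" by (metis image_eqI)
  qed
  have "card Z = card (PiE (-J) (\<lambda>_. (UNIV::'a set)))" using card_image[OF inj] img by simp
  also have "\<dots> = CARD('a) ^ card (-J)" by (simp add: card_PiE)
  also have "card (-J) = CARD('n) - card J" by (simp add: Compl_eq_Diff_UNIV card_Diff_subset)
  finally show ?thesis by (simp add: Z_def)
qed

lemma card_perp:
  fixes f :: "'a::{finite,field}^'n \<Rightarrow> 'a^'n \<Rightarrow> 'a"
  assumes ab: "alt_bilinear f" and nd: "nondegenerate f" and A: "vec.subspace A"
  shows "card (perp f A) = CARD('a) ^ (CARD('n) - vec.dim A)"
proof -
  obtain BA where BA: "BA \<subseteq> A" "vec.independent BA" "A \<subseteq> vec.span BA" "card BA = vec.dim A"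
    using vec.basis_exists by blast
  obtain B where B: "BA \<subseteq> B" "vec.independent B" "UNIV \<subseteq> vec.span B"
    by (rule vec.maximal_independent_subset_extend[of BA UNIV]) (use BA(2) in auto)
  have cB: "card B = CARD('n)"
    using vec.basis_card_eq_dim[of B UNIV] B vec.dim_UNIV card_cart_basis by simp
  obtain e where e: "bij_betw e (UNIV::'n set) B"
    using finite_same_card_bij[of "UNIV::'n set" B] cB by auto
  define \<Psi> where "\<Psi> = (\<lambda>x. \<chi> i. f x (e i))"
  have lin: "Vector_Spaces.linear (*s) (*s) \<Psi>"
  proof (unfold Vector_Spaces.linear_iff, intro conjI allI)
    show "vector_space ((*s) :: 'a \<Rightarrow> 'a^'n \<Rightarrow> 'a^'n)" by (rule vec.vector_space_axioms)
    show "vector_space ((*s) :: 'a \<Rightarrow> 'a^'n \<Rightarrow> 'a^'n)" by (rule vec.vector_space_axioms)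
    fix x y :: "'a^'n" show "\<Psi> (x + y) = \<Psi> x + \<Psi> y"
      unfolding \<Psi>_def by (rule vec_eq_iff[THEN iffD2]) (simp add: f_add1[OF ab])
  next
    fix c and x :: "'a^'n" show "\<Psi> (c *s x) = c *s \<Psi> x"
      unfolding \<Psi>_def by (rule vec_eq_iff[THEN iffD2]) (simp add: f_sc1[OF ab])
  qed
  have inj: "inj \<Psi>"
  proof (rule injI)
    fix x y assume "\<Psi> x = \<Psi> y"
    then have "\<forall>i. f (x - y) (e i) = 0" by (simp add: \<Psi>_def vec_eq_iff f_diff1[OF ab])
    then have "\<forall>b\<in>B. f (x - y) b = 0" using e unfolding bij_betw_def by (metis imageE)
    then have "vec.span B \<subseteq> {z. f (x - y) z = 0}" by (intro vec.span_minimal subspace_ker2[OF ab]) auto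
    then have "\<forall>z. f (x - y) z = 0" using B(3) by blast
    then have "x - y = 0" using nd unfolding nondegenerate_def by blast
    then show "x = y" by simp
  qed
  have surj: "surj \<Psi>" by (rule vec.linear_inj_imp_surj[OF lin inj])
  define J where "J = e -` BA"
  have cJ: "card J = card BA"
  proof -
    have "bij_betw e J BA" unfolding J_def bij_betw_def
    proof
      show "inj_on e (e -` BA)" using e unfolding bij_betw_def by (metis inj_on_subset subset_UNIV)
      show "e ` (e -` BA) = BA" using e B(1) unfolding bij_betw_def by blast
    qed
    then show ?thesis by (rule bij_betw_same_card)
  qed
  have eq: "perp f A = \<Psi> -` {y. \<forall>i\<in>J. y$i = 0}"
  proof (intro set_eqI)
    fix x
    have "x \<in> perp f A \<longleftrightarrow> (\<forall>b\<in>BA. f x b = 0)" by (rule perp_span[OF ab BA(3) BA(1)])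
    also have "\<dots> \<longleftrightarrow> (\<forall>i\<in>J. f x (e i) = 0)"
    proof
      assume "\<forall>b\<in>BA. f x b = 0" then show "\<forall>i\<in>J. f x (e i) = 0" unfolding J_def by blast
    next
      assume h: "\<forall>i\<in>J. f x (e i) = 0"
      show "\<forall>b\<in>BA. f x b = 0"
      proof
        fix b assume "b \<in> BA"
        then obtain i where "e i = b" using e B(1) unfolding bij_betw_def by blast
        then show "f x b = 0" using h \<open>b \<in> BA\<close> unfolding J_def by blast
      qed
    qed
    finally show "x \<in> perp f A \<longleftrightarrow> x \<in> \<Psi> -` {y. \<forall>i\<in>J. y$i = 0}" by (simp add: \<Psi>_def)
  qed
  have "card (perp f A) = card {y::'a^'n. \<forall>i\<in>J. y$i = 0}"
    unfolding eq using surj by (intro card_vimage_inj[OF inj]) auto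
  then show ?thesis using card_coord[of J] cJ BA(4) by simp
qed


lemma ti_subspace: "totally_isotropic f W \<Longrightarrow> vec.subspace W"
  by (simp add: totally_isotropic_def)


lemma geom_solve:
  fixes q c :: real
  assumes q: "q > 1" and ts: "t \<le> s" and h: "c * (q * q ^ t - q ^ t) = q ^ s - q ^ t"
  shows "c = (q ^ (s - t) - 1) / (q - 1)"
proof -
  have qs: "q ^ s = q ^ t * q ^ (s - t)" using ts by (simp flip: power_add)
  have "q ^ t * (c * (q - 1)) = q ^ t * (q ^ (s - t) - 1)" using h unfolding qs by (simp add: algebra_simps)
  then have "c * (q - 1) = q ^ (s - t) - 1" using q by simp
  then show ?thesis using q by (simp add: field_simps)
qed

definition Uset :: "('a::{finite,field}^'n) set \<Rightarrow> ('a^'n) set \<Rightarrow> ('a^'n) set set" where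
  "Uset T M = {U. vec.subspace U \<and> T \<subseteq> U \<and> U \<subseteq> M \<and> card U = CARD('a) * card T}"

definition Wset :: "('a::{finite,field}^'n) set \<Rightarrow> ('a^'n) set \<Rightarrow> ('a^'n) set set" where
  "Wset T M = {W. vec.subspace W \<and> T \<subseteq> W \<and> W \<subseteq> M \<and> card W = CARD('a) * (CARD('a) * card T)}"


lemma Nprime_pos:
  fixes q :: real
  assumes q: "q > 1" and am: "a \<le> m" and m: "m \<le> \<nu>"
  shows "Nprime q a m \<nu> > 0"
proof -
  have "(\<Prod>i=1..m-a. (q ^ (2 * (\<nu> - m + i)) - 1) / (q ^ i - 1)) > 0"
  proof (rule prod_pos)
    fix i assume i: "i \<in> {1..m-a}"
    have "q ^ (2 * (\<nu> - m + i)) > 1" using q i by (intro one_less_power) auto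
    moreover have "q ^ i > 1" using q i by (intro one_less_power) auto
    ultimately show "(q ^ (2 * (\<nu> - m + i)) - 1) / (q ^ i - 1) > 0" by simp
  qed
  then show ?thesis using am by (simp add: Nprime_def)
qed

lemma hyperplane_exists:
  fixes M T :: "('a::{finite,field}^'n) set"
  assumes Ms: "vec.subspace M" and dM: "vec.dim M = Suc k" and Ts: "vec.subspace T" and TM: "T \<subseteq> M"
    and dT: "vec.dim T \<ge> 1"
  shows "\<exists>H\<in>subspaces_of M k. \<not> T \<subseteq> H"
proof -
  have "T \<noteq> {0}" using dT by auto
  then obtain v where v: "v \<in> T" "v \<noteq> 0" using vec.subspace_0[OF Ts] by blast
  have iv: "vec.independent {v}" using v by simp
  obtain B where B: "{v} \<subseteq> B" "B \<subseteq> M" "vec.independent B" "M \<subseteq> vec.span B"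
    by (rule vec.maximal_independent_subset_extend[of "{v}" M]) (use v TM iv in auto)
  have cB: "card B = Suc k" using vec.basis_card_eq_dim[OF B(2) B(4) B(3)] dM by simp
  define H where "H = vec.span (B - {v})"
  have Hs: "vec.subspace H" unfolding H_def by simp
  have HM: "H \<subseteq> M" unfolding H_def using B(2) Ms by (intro vec.span_minimal) auto
  have iB: "vec.independent (B - {v})" using B(3) vec.independent_mono by blast
  have dH: "vec.dim H = k" unfolding H_def using vec.dim_span_eq_card_independent[OF iB] cB B(1) by simp
  have "v \<notin> H" unfolding H_def using B(3) B(1) vec.dependent_def by blast
  then have "\<not> T \<subseteq> H" using v by blast
  moreover have "H \<in> subspaces_of M k" using Hs HM dH by (simp add: subspaces_of_def)
  ultimately show ?thesis by blast
qed

context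
  fixes f :: "'a::{finite,field}^'n \<Rightarrow> 'a^'n \<Rightarrow> 'a" and \<nu> :: nat
  assumes ab: "alt_bilinear f" and nd: "nondegenerate f" and dimV: "CARD('n) = 2 * \<nu>"
begin

lemma ti_ext_set:
  assumes A: "totally_isotropic f A"
  shows "{B. totally_isotropic f B \<and> A \<subseteq> B \<and> card B = CARD('a) * card A}
       = {B. vec.subspace B \<and> A \<subseteq> B \<and> B \<subseteq> perp f A \<and> card B = CARD('a) * card A}"
proof (intro set_eqI iffI)
  fix B assume "B \<in> {B. totally_isotropic f B \<and> A \<subseteq> B \<and> card B = CARD('a) * card A}"
  then show "B \<in> {B. vec.subspace B \<and> A \<subseteq> B \<and> B \<subseteq> perp f A \<and> card B = CARD('a) * card A}"
    by (auto simp: totally_isotropic_def perp_def)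
next
  fix B assume "B \<in> {B. vec.subspace B \<and> A \<subseteq> B \<and> B \<subseteq> perp f A \<and> card B = CARD('a) * card A}"
  then have B: "vec.subspace B" "A \<subseteq> B" "B \<subseteq> perp f A" "card B = CARD('a) * card A" by auto
  have As: "vec.subspace A" using A by (simp add: totally_isotropic_def)
  have "card A < card B"
  proof -
    have "card A > 0" using As vec.subspace_0[OF As] by (auto simp: card_gt_0_iff)
    then show ?thesis using B(4) card_field_ge2[where 'a='a] by simp
  qed
  then obtain v where v: "v \<in> B" "v \<notin> A" using B(2) by (metis psubsetI psubset_card_mono finite subsetI subset_antisym less_irrefl) 
  have Bspan: "vec.span (insert v A) = B" by (rule span_insert_eq_subspace[OF As B(1) B(2) B(4) v])
  have "\<forall>x\<in>B. \<forall>y\<in>B. f x y = 0"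
  proof (intro ballI)
    fix x y assume x: "x \<in> B" and y: "y \<in> B"
    have xp: "x \<in> perp f A" and vp: "v \<in> perp f A" using x v B(3) by auto
    obtain c where c: "y - c *s v \<in> vec.span A" using y Bspan vec.span_breakdown_eq[of y v A] by blast
    have sA: "vec.span A = A" using As by simp
    have ca: "y - c *s v \<in> A" using c sA by simp
    obtain c0 where "x - c0 *s v \<in> vec.span A" using x Bspan vec.span_breakdown_eq[of x v A] by blast
    then have c0a: "x - c0 *s v \<in> A" using sA by simp
    have "f x v = f (c0 *s v + (x - c0 *s v)) v" by simp
    also have "\<dots> = c0 * f v v + f (x - c0 *s v) v" by (simp only: f_add1[OF ab] f_sc1[OF ab])
    also have "\<dots> = - f v (x - c0 *s v)" by (simp add: f_alt[OF ab] f_skew[OF ab, of "x - c0 *s v" v])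
    also have "\<dots> = 0" using vp c0a by (simp add: perp_def)
    finally have fxv: "f x v = 0" .
    have "f x y = f x (c *s v + (y - c *s v))" by simp
    also have "\<dots> = c * f x v + f x (y - c *s v)" by (simp only: f_add2[OF ab] f_sc2[OF ab])
    also have "\<dots> = 0" using fxv xp ca by (simp add: perp_def)
    finally show "f x y = 0" .
  qed
  then show "B \<in> {B. totally_isotropic f B \<and> A \<subseteq> B \<and> card B = CARD('a) * card A}"
    using B by (simp add: totally_isotropic_def)
qed


lemma Pm_card: "A \<in> Pm f k \<Longrightarrow> card A = CARD('a) ^ k"
  using card_subspace[of A] by (simp add: Pm_def totally_isotropic_def)

lemma Pm_iff: "A \<in> Pm f k \<longleftrightarrow> totally_isotropic f A \<and> card A = CARD('a) ^ k"
  using dim_iff_card[of A k] by (auto simp: Pm_def totally_isotropic_def)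

lemma count_ti:
  assumes A: "A \<in> Pm f k"
  shows "card {B\<in>Pm f (Suc k). A \<subseteq> B} * (CARD('a) ^ Suc k - CARD('a) ^ k) = CARD('a) ^ (2 * \<nu> - k) - CARD('a) ^ k"
proof -
  have At: "totally_isotropic f A" and cA: "card A = CARD('a) ^ k" and As: "vec.subspace A"
    using A Pm_card by (auto simp: Pm_def totally_isotropic_def)
  have dA: "vec.dim A = k" using A by (simp add: Pm_def)
  have "{B\<in>Pm f (Suc k). A \<subseteq> B} = {B. totally_isotropic f B \<and> A \<subseteq> B \<and> card B = CARD('a) * card A}"
    using cA by (auto simp: Pm_iff)
  also have "\<dots> = {B. vec.subspace B \<and> A \<subseteq> B \<and> B \<subseteq> perp f A \<and> card B = CARD('a) * card A}"
    by (rule ti_ext_set[OF At])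
  finally have eq: "{B\<in>Pm f (Suc k). A \<subseteq> B} = \<dots>" .
  have AP: "A \<subseteq> perp f A" using At by (auto simp: totally_isotropic_def perp_def)
  have "card {B\<in>Pm f (Suc k). A \<subseteq> B} * (CARD('a) * card A - card A) = card (perp f A) - card A"
    unfolding eq by (rule count_ext[OF As subspace_perp[OF ab] AP])
  then show ?thesis using card_perp[OF ab nd As] dA cA dimV by simp
qed


lemma count_in:
  assumes A: "A \<in> Pm f a" and F: "F \<in> Pm f m" and AF: "A \<subseteq> F"
  shows "card {B\<in>Pm f (Suc a). A \<subseteq> B \<and> B \<subseteq> F} * (CARD('a) ^ Suc a - CARD('a) ^ a) = CARD('a) ^ m - CARD('a) ^ a"
proof -
  have As: "vec.subspace A" and Fs: "vec.subspace F" using A F by (auto simp: Pm_def totally_isotropic_def)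
  have cA: "card A = CARD('a) ^ a" and cF: "card F = CARD('a) ^ m" using A F Pm_card by auto
  have "{B\<in>Pm f (Suc a). A \<subseteq> B \<and> B \<subseteq> F} = {B. vec.subspace B \<and> A \<subseteq> B \<and> B \<subseteq> F \<and> card B = CARD('a) * card A}"
    using F cA by (auto simp: Pm_iff totally_isotropic_def)
  then show ?thesis using count_ext[OF As Fs AF] cA cF by simp
qed

lemma Nprime_step:
  fixes q :: real
  assumes "a < m" "m \<le> \<nu>"
  shows "Nprime q a m \<nu> = Nprime q (Suc a) m \<nu> * ((q ^ (2 * (\<nu> - a)) - 1) / (q ^ (m - a) - 1))"
proof -
  obtain k where k: "m - a = Suc k" using assms by (metis Suc_diff_Suc)
  have k2: "m - Suc a = k" using k by simp
  have i: "\<nu> - m + Suc k = \<nu> - a" using k assms by simp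
  define g where "g i = (q ^ (2 * (\<nu> - m + i)) - 1) / (q ^ i - 1)" for i
  have am: "a \<le> m" "Suc a \<le> m" using assms by auto
  have n1: "Nprime q a m \<nu> = prod g {1..Suc k}"
    unfolding Nprime_def g_def by (simp only: if_P[OF am(1)] k)
  have n2: "Nprime q (Suc a) m \<nu> = prod g {1..k}"
    unfolding Nprime_def g_def by (simp only: if_P[OF am(2)] k2)
  have "prod g {1..Suc k} = prod g {1..k} * g (Suc k)" by (simp add: prod.cl_ivl_Suc)
  moreover have "g (Suc k) = (q ^ (2 * (\<nu> - a)) - 1) / (q ^ (m - a) - 1)"
    unfolding g_def i k ..
  ultimately show ?thesis using n1 n2 by simp
qed

lemma count_N_aux:
  "m - a = d \<Longrightarrow> a \<le> m \<Longrightarrow> m \<le> \<nu> \<Longrightarrow> A \<in> Pm f a \<Longrightarrow>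
     real (card {F\<in>Pm f m. A \<subseteq> F}) = Nprime (real CARD('a)) a m \<nu>"
proof (induction d arbitrary: a A)
  case 0
  then have am: "a = m" by simp
  have "{F\<in>Pm f m. A \<subseteq> F} = {A}"
  proof (intro set_eqI iffI)
    fix F assume "F \<in> {F\<in>Pm f m. A \<subseteq> F}"
    then have "F \<in> Pm f m" "A \<subseteq> F" by auto
    moreover have "card F = card A" using \<open>F \<in> Pm f m\<close> "0.prems"(4) am Pm_card by auto
    ultimately show "F \<in> {A}" by (metis card_subset_eq finite singletonI)
  qed (use "0.prems" am in auto)
  then show ?case using am by (simp add: Nprime_def)
next
  case (Suc d)
  note prems = Suc.prems
  have am: "a < m" using prems by simp
  define Q where "Q = CARD('a)"
  define q where "q = real Q"
  have Q2: "Q \<ge> 2" unfolding Q_def by (rule card_field_ge2)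
  have q2: "q \<ge> 2" using Q2 by (simp add: q_def)
  define S where "S = {F\<in>Pm f m. A \<subseteq> F}"
  define E where "E = {B\<in>Pm f (Suc a). A \<subseteq> B}"
  define D where "D = Q ^ Suc a - Q ^ a"
  have h1: "\<forall>F\<in>S. card {B\<in>E. B \<subseteq> F} * D = Q ^ m - Q ^ a"
  proof
    fix F assume F: "F \<in> S"
    have "{B\<in>E. B \<subseteq> F} = {B\<in>Pm f (Suc a). A \<subseteq> B \<and> B \<subseteq> F}" by (auto simp: E_def)
    then show "card {B\<in>E. B \<subseteq> F} * D = Q ^ m - Q ^ a"
      using count_in[OF prems(4), of F m] F by (simp add: S_def D_def Q_def)
  qed
  have h2: "\<forall>B\<in>E. real (card {F\<in>S. B \<subseteq> F}) = Nprime q (Suc a) m \<nu>"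
  proof
    fix B assume B: "B \<in> E"
    have "{F\<in>S. B \<subseteq> F} = {F\<in>Pm f m. B \<subseteq> F}" using B by (auto simp: S_def E_def)
    moreover have "real (card {F\<in>Pm f m. B \<subseteq> F}) = Nprime q (Suc a) m \<nu>"
      using Suc.IH[of "Suc a" B] prems am B by (simp add: E_def q_def Q_def)
    ultimately show "real (card {F\<in>S. B \<subseteq> F}) = Nprime q (Suc a) m \<nu>" by simp
  qed
  have swap: "(\<Sum>F\<in>S. card {B\<in>E. B \<subseteq> F}) = (\<Sum>B\<in>E. card {F\<in>S. B \<subseteq> F})"
    using sum.swap_restrict[of S E "\<lambda>_ _. (1::nat)" "\<lambda>F B. B \<subseteq> F"] by simp
  have cE: "card E * D = Q ^ (2 * \<nu> - a) - Q ^ a"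
    using count_ti[OF prems(4)] by (simp add: E_def D_def Q_def)
  have "real (card S) * real (Q ^ m - Q ^ a) = (\<Sum>F\<in>S. real (card {B\<in>E. B \<subseteq> F} * D))"
    using h1 by simp
  also have "\<dots> = real (\<Sum>F\<in>S. card {B\<in>E. B \<subseteq> F}) * real D"
    by (simp add: sum_distrib_right)
  also have "\<dots> = (\<Sum>B\<in>E. real (card {F\<in>S. B \<subseteq> F})) * real D"
    unfolding swap by simp
  also have "\<dots> = real (card E) * Nprime q (Suc a) m \<nu> * real D"
    using h2 by simp
  also have "\<dots> = real (Q ^ (2 * \<nu> - a) - Q ^ a) * Nprime q (Suc a) m \<nu>"
    using arg_cong[OF cE, of real] by (simp add: algebra_simps del: of_nat_diff)
  finally have key: "real (card S) * real (Q ^ m - Q ^ a) = real (Q ^ (2 * \<nu> - a) - Q ^ a) * Nprime q (Suc a) m \<nu>" .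
  have le1: "Q ^ a \<le> Q ^ m" using am Q2 by (intro power_increasing) auto
  have le2: "Q ^ a \<le> Q ^ (2 * \<nu> - a)" using am prems Q2 by (intro power_increasing) auto
  have e1: "real (Q ^ m - Q ^ a) = q ^ a * (q ^ (m - a) - 1)"
    using le1 am by (simp add: of_nat_diff q_def algebra_simps flip: power_add)
  have e2: "real (Q ^ (2 * \<nu> - a) - Q ^ a) = q ^ a * (q ^ (2 * (\<nu> - a)) - 1)"
    using le2 am prems by (simp add: of_nat_diff q_def algebra_simps flip: power_add)
  have pos: "q ^ (m - a) - 1 > 0" using q2 am
    by (smt (verit) one_less_power zero_less_diff)
  have qa: "q ^ a > 0" using q2 by simp
  define X where "X = q ^ (m - a) - 1"
  define Y where "Y = q ^ (2 * (\<nu> - a)) - 1"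
  define N where "N = Nprime q (Suc a) m \<nu>"
  have key': "real (card S) * (q ^ a * X) = (q ^ a * Y) * N"
    using key unfolding e1 e2 X_def Y_def N_def .
  have "q ^ a * (real (card S) * X) = q ^ a * (Y * N)" using key' by (simp only: mult_ac)
  then have "real (card S) * X = Y * N" using qa q2 by simp
  then have "real (card S) = N * (Y / X)" using pos unfolding X_def[symmetric] by (simp add: field_simps)
  then have "real (card S) = Nprime q (Suc a) m \<nu> * ((q ^ (2 * (\<nu> - a)) - 1) / (q ^ (m - a) - 1))"
    unfolding N_def X_def Y_def .
  also have "\<dots> = Nprime q a m \<nu>" using Nprime_step[OF am prems(3)] by simp
  finally show ?case by (simp add: S_def q_def Q_def)
qed


lemma count_N:
  assumes A: "A \<in> Pm f a" and m: "m \<le> \<nu>"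
  shows "real (card {F\<in>Pm f m. A \<subseteq> F}) = Nprime (real CARD('a)) a m \<nu>"
proof (cases "a \<le> m")
  case True then show ?thesis using count_N_aux[OF refl True m A] by simp
next
  case False
  have "{F\<in>Pm f m. A \<subseteq> F} = {}"
  proof (rule ccontr)
    assume "{F\<in>Pm f m. A \<subseteq> F} \<noteq> {}"
    then obtain F where F: "F \<in> Pm f m" "A \<subseteq> F" by auto
    have "card A \<le> card F" using F(2) by (intro card_mono) auto
    then have "CARD('a) ^ a \<le> CARD('a) ^ m" using F(1) A Pm_card by auto
    then have "a \<le> m" using card_field_ge2[where 'a='a] by (simp add: power_le_imp_le_exp)
    with False show False by simp
  qed
  then show ?thesis using False by (simp add: Nprime_def)
qed

lemma count_ext_real:
  fixes A X :: "('a^'n) set"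
  assumes A: "vec.subspace A" and X: "vec.subspace X" and AX: "A \<subseteq> X"
  shows "real (card {B. vec.subspace B \<and> A \<subseteq> B \<and> B \<subseteq> X \<and> card B = CARD('a) * card A})
           * (real CARD('a) * real (card A) - real (card A)) = real (card X) - real (card A)"
proof -
  have le1: "card A \<le> card X" using AX by (intro card_mono) auto
  have le2: "card A \<le> CARD('a) * card A" using card_field_ge2[where 'a='a] by simp
  have "real (card {B. vec.subspace B \<and> A \<subseteq> B \<and> B \<subseteq> X \<and> card B = CARD('a) * card A}
           * (CARD('a) * card A - card A)) = real (card X - card A)"
    using count_ext[OF A X AX] by simp
  then show ?thesis using le1 le2 by (simp add: of_nat_diff)
qed


context
  fixes T M :: "('a^'n) set" and t s :: nat
  assumes Ts: "vec.subspace T" and Mt: "totally_isotropic f M" and TM: "T \<subseteq> M"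
    and cT: "card T = CARD('a) ^ t" and cM: "card M = CARD('a) ^ s" and ts: "t + 2 \<le> s"
begin

lemma Ms: "vec.subspace M" using Mt by (simp add: totally_isotropic_def)

lemma q_gt1: "real CARD('a) > 1" using card_field_ge2[where 'a='a] by simp

lemma Uset_count: "real (card (Uset T M)) = (real CARD('a) ^ (s - t) - 1) / (real CARD('a) - 1)"
  using count_ext_real[OF Ts Ms TM] cT cM ts q_gt1
  by (intro geom_solve) (auto simp: Uset_def)

lemma Uset_in_W:
  assumes W: "W \<in> Wset T M"
  shows "card {U\<in>Uset T M. U \<subseteq> W} = CARD('a) + 1"
proof -
  have Wp: "vec.subspace W" "T \<subseteq> W" "W \<subseteq> M" "card W = CARD('a) * (CARD('a) * card T)"
    using W by (auto simp: Wset_def)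
  have eq: "{U\<in>Uset T M. U \<subseteq> W} = {B. vec.subspace B \<and> T \<subseteq> B \<and> B \<subseteq> W \<and> card B = CARD('a) * card T}"
    using Wp by (auto simp: Uset_def)
  define c where "c = real (card {U\<in>Uset T M. U \<subseteq> W})"
  define q where "q = real CARD('a)"
  have h: "c * (q * q ^ t - q ^ t) = q * q * q ^ t - q ^ t"
    using count_ext_real[OF Ts Wp(1) Wp(2)] Wp(4) cT unfolding c_def q_def eq by simp
  have "c * (q ^ t * (q - 1)) = q ^ t * ((q + 1) * (q - 1))" using h by (simp add: algebra_simps)
  then have "c = q + 1" using q_gt1 unfolding q_def by simp
  then show ?thesis unfolding c_def q_def by (metis of_nat_1 of_nat_add of_nat_eq_iff)
qed

lemma Wset_over_U:
  assumes U: "U \<in> Uset T M"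
  shows "real (card {W\<in>Wset T M. U \<subseteq> W}) = (real CARD('a) ^ (s - Suc t) - 1) / (real CARD('a) - 1)"
proof -
  have Up: "vec.subspace U" "T \<subseteq> U" "U \<subseteq> M" "card U = CARD('a) * card T"
    using U by (auto simp: Uset_def)
  have eq: "{W\<in>Wset T M. U \<subseteq> W} = {B. vec.subspace B \<and> U \<subseteq> B \<and> B \<subseteq> M \<and> card B = CARD('a) * card U}"
    using Up by (auto simp: Wset_def)
  have cU: "card U = CARD('a) ^ Suc t" using Up(4) cT by simp
  show ?thesis
    using count_ext_real[OF Up(1) Ms Up(3)] cU cM ts q_gt1 unfolding eq
    by (intro geom_solve) auto
qed

lemma Wset_count: "real (card (Wset T M)) = gbinom (real CARD('a)) (s - t) 2"
proof -
  define q where "q = real CARD('a)"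
  have q1: "q > 1" using q_gt1 by (simp add: q_def)
  have swap: "(\<Sum>W\<in>Wset T M. card {U\<in>Uset T M. U \<subseteq> W}) = (\<Sum>U\<in>Uset T M. card {W\<in>Wset T M. U \<subseteq> W})"
    using sum.swap_restrict[of "Wset T M" "Uset T M" "\<lambda>_ _. (1::nat)" "\<lambda>W U. U \<subseteq> W"] by simp
  have "real (card (Wset T M)) * (q + 1) = (\<Sum>W\<in>Wset T M. real (card {U\<in>Uset T M. U \<subseteq> W}))"
    using Uset_in_W by (simp add: q_def)
  also have "\<dots> = (\<Sum>U\<in>Uset T M. real (card {W\<in>Wset T M. U \<subseteq> W}))"
    using arg_cong[OF swap, of real] by simp
  also have "\<dots> = real (card (Uset T M)) * ((q ^ (s - Suc t) - 1) / (q - 1))"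
    using Wset_over_U by (simp add: q_def)
  also have "\<dots> = (q ^ (s - t) - 1) / (q - 1) * ((q ^ (s - Suc t) - 1) / (q - 1))"
    using Uset_count by (simp add: q_def)
  finally have h: "real (card (Wset T M)) * (q + 1) = (q ^ (s - t) - 1) / (q - 1) * ((q ^ (s - Suc t) - 1) / (q - 1))" .
  have g2: "gbinom q (s - t) 2 = (q ^ (s - t) - 1) / (q ^ 2 - 1) * ((q ^ (s - t - 1) - 1) / (q - 1))"
    by (simp add: gbinom_def numeral_2_eq_2)
  define X where "X = (q ^ (s - t) - 1) / (q - 1) * ((q ^ (s - Suc t) - 1) / (q - 1))"
  have c: "real (card (Wset T M)) = X / (q + 1)" using h q1 unfolding X_def[symmetric]
    by (simp add: eq_divide_eq)
  have "q ^ 2 - 1 = (q - 1) * (q + 1)" by (simp add: algebra_simps power2_eq_square)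
  then have "gbinom q (s - t) 2 = X / (q + 1)" unfolding g2 X_def using q1
    by (simp add: field_simps)
  then show ?thesis using c unfolding q_def by simp
qed


lemma ti_sub: "totally_isotropic f X \<Longrightarrow> vec.subspace Y \<Longrightarrow> Y \<subseteq> X \<Longrightarrow> totally_isotropic f Y"
  by (auto simp: totally_isotropic_def)

lemma Uset_Pm: "U \<in> Uset T M \<Longrightarrow> U \<in> Pm f (Suc t)"
  using Mt cT by (auto simp: Uset_def Pm_iff intro: ti_sub)

lemma Wset_Pm: "W \<in> Wset T M \<Longrightarrow> W \<in> Pm f (Suc (Suc t))"
  using Mt cT by (auto simp: Wset_def Pm_iff intro: ti_sub)

lemma bonf_F:
  assumes F: "F \<in> Pm f m1" and TF: "T \<subseteq> F"
  shows "card {U\<in>Uset T M. U \<subseteq> F} \<le> (if vec.dim (F \<inter> M) \<ge> t + 1 then 1 else 0) + CARD('a) * card {W\<in>Wset T M. W \<subseteq> F}"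
proof (cases "{U\<in>Uset T M. U \<subseteq> F} = {}")
  case True
  then have "card {U\<in>Uset T M. U \<subseteq> F} = 0" by (simp only: card.empty)
  then show ?thesis by linarith
next
  case False
  then obtain U0 where U0: "U0 \<in> Uset T M" "U0 \<subseteq> F" by auto
  have Fs: "vec.subspace F" using F by (simp add: Pm_def totally_isotropic_def)
  have U0p: "vec.subspace U0" "T \<subseteq> U0" "U0 \<subseteq> M" "card U0 = CARD('a) * card T" using U0 by (auto simp: Uset_def)
  have "vec.dim U0 = t + 1" using dim_iff_card[OF U0p(1)] U0p(4) cT by simp
  moreover have "vec.dim U0 \<le> vec.dim (F \<inter> M)" using U0 U0p by (intro vec.dim_subset) auto
  ultimately have dimFM: "vec.dim (F \<inter> M) \<ge> t + 1" by simp
  define UF where "UF = {U\<in>Uset T M. U \<subseteq> F}"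
  define WF0 where "WF0 = {W\<in>Wset T M. W \<subseteq> F \<and> U0 \<subseteq> W}"
  have cover: "UF - {U0} \<subseteq> (\<Union>W\<in>WF0. {U\<in>Uset T M. U \<subseteq> W} - {U0})"
  proof
    fix U assume "U \<in> UF - {U0}"
    then have U: "U \<in> Uset T M" "U \<subseteq> F" "U \<noteq> U0" by (auto simp: UF_def)
    have Up: "vec.subspace U" "T \<subseteq> U" "U \<subseteq> M" "card U = CARD('a) * card T" using U by (auto simp: Uset_def)
    have "\<not> U \<subseteq> U0"
    proof
      assume "U \<subseteq> U0"
      then have "U = U0" using Up(4) U0p(4) by (metis card_subset_eq finite)
      with U(3) show False by simp
    qed
    then obtain v where v: "v \<in> U" "v \<notin> U0" by auto
    define W where "W = vec.span (insert v U0)"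
    have cW: "card W = CARD('a) * card U0" unfolding W_def by (rule card_span_insert[OF U0p(1) v(2)])
    have WM: "W \<subseteq> M" unfolding W_def using v Up U0p Ms by (intro vec.span_minimal) auto
    have WF: "W \<subseteq> F" unfolding W_def using v U U0 Fs by (intro vec.span_minimal) auto
    have U0W: "U0 \<subseteq> W" unfolding W_def using vec.span_superset[of "insert v U0"] by blast
    have "vec.subspace W" unfolding W_def by simp
    then have "W \<in> WF0" unfolding WF0_def Wset_def using cW WM WF U0W U0p by auto
    moreover have "U \<subseteq> W"
    proof -
      have "vec.span (insert v T) = U" using v U0p
        by (intro span_insert_eq_subspace[OF Ts Up(1) Up(2) Up(4)]) auto
      moreover have "vec.span (insert v T) \<subseteq> W" unfolding W_def using U0p by (intro vec.span_mono) auto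
      ultimately show ?thesis by simp
    qed
    ultimately show "U \<in> (\<Union>W\<in>WF0. {U\<in>Uset T M. U \<subseteq> W} - {U0})" using U by auto
  qed
  have "card (UF - {U0}) \<le> card (\<Union>W\<in>WF0. {U\<in>Uset T M. U \<subseteq> W} - {U0})"
    by (rule card_mono[OF _ cover]) simp
  also have "\<dots> \<le> (\<Sum>W\<in>WF0. card ({U\<in>Uset T M. U \<subseteq> W} - {U0}))"
    by (rule card_UN_le) simp
  also have "\<dots> = (\<Sum>W\<in>WF0. CARD('a))"
  proof (rule sum.cong[OF refl])
    fix W assume W: "W \<in> WF0"
    then have "U0 \<in> {U\<in>Uset T M. U \<subseteq> W}" using U0 by (auto simp: WF0_def)
    then show "card ({U\<in>Uset T M. U \<subseteq> W} - {U0}) = CARD('a)"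
      using Uset_in_W[of W] W by (simp add: WF0_def)
  qed
  also have "\<dots> = CARD('a) * card WF0" by simp
  also have "\<dots> \<le> CARD('a) * card {W\<in>Wset T M. W \<subseteq> F}"
    by (intro mult_left_mono card_mono) (auto simp: WF0_def)
  finally have "card (UF - {U0}) \<le> CARD('a) * card {W\<in>Wset T M. W \<subseteq> F}" .
  moreover have "card UF = card (UF - {U0}) + 1"
  proof -
    have "U0 \<in> UF" using U0 by (simp add: UF_def)
    then have "card UF > 0" by (auto simp: card_gt_0_iff)
    then show ?thesis using \<open>U0 \<in> UF\<close> by (simp add: card_Diff_singleton)
  qed
  ultimately show ?thesis using dimFM by (simp add: UF_def)
qed


lemma C1_lower:
  assumes m1: "m1 \<le> \<nu>"
  shows "real (card (C1 f M T m1 t)) \<ge>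
    gbinom (real CARD('a)) (s - t) 1 * Nprime (real CARD('a)) (t + 1) m1 \<nu>
    - real CARD('a) * gbinom (real CARD('a)) (s - t) 2 * Nprime (real CARD('a)) (t + 2) m1 \<nu>"
proof -
  define q where "q = real CARD('a)"
  define S where "S = {F\<in>Pm f m1. T \<subseteq> F}"
  define g where "g F = real (card {U\<in>Uset T M. U \<subseteq> F})" for F
  define h where "h F = real (card {W\<in>Wset T M. W \<subseteq> F})" for F
  have C1eq: "C1 f M T m1 t = {F\<in>S. t + 1 \<le> vec.dim (F \<inter> M)}" by (auto simp: C1_def S_def)
  have "real (card (C1 f M T m1 t)) = (\<Sum>F\<in>S. if t + 1 \<le> vec.dim (F \<inter> M) then 1 else 0)"
    unfolding C1eq using sum.inter_filter[of S "\<lambda>_. (1::real)" "\<lambda>F. t + 1 \<le> vec.dim (F \<inter> M)"] by simp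
  also have "\<dots> \<ge> (\<Sum>F\<in>S. g F - q * h F)"
  proof (rule sum_mono)
    fix F assume "F \<in> S"
    then have "card {U\<in>Uset T M. U \<subseteq> F} \<le> (if vec.dim (F \<inter> M) \<ge> t + 1 then 1 else 0) + CARD('a) * card {W\<in>Wset T M. W \<subseteq> F}"
      by (intro bonf_F) (auto simp: S_def)
    then have "g F \<le> real ((if vec.dim (F \<inter> M) \<ge> t + 1 then 1 else 0) + CARD('a) * card {W\<in>Wset T M. W \<subseteq> F})"
      unfolding g_def by linarith
    then show "g F - q * h F \<le> (if t + 1 \<le> vec.dim (F \<inter> M) then 1 else 0)"
      by (simp add: h_def q_def split: if_splits)
  qed
  finally have l: "(\<Sum>F\<in>S. g F) - q * (\<Sum>F\<in>S. h F) \<le> real (card (C1 f M T m1 t))"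
    by (simp add: sum_subtractf sum_distrib_left)
  have sg: "(\<Sum>F\<in>S. g F) = real (card (Uset T M)) * Nprime q (t + 1) m1 \<nu>"
  proof -
    have "(\<Sum>F\<in>S. card {U\<in>Uset T M. U \<subseteq> F}) = (\<Sum>U\<in>Uset T M. card {F\<in>S. U \<subseteq> F})"
      using sum.swap_restrict[of S "Uset T M" "\<lambda>_ _. (1::nat)" "\<lambda>F U. U \<subseteq> F"] by simp
    then have "real (\<Sum>F\<in>S. card {U\<in>Uset T M. U \<subseteq> F}) = real (\<Sum>U\<in>Uset T M. card {F\<in>S. U \<subseteq> F})" by (rule arg_cong)
    then have "(\<Sum>F\<in>S. g F) = (\<Sum>U\<in>Uset T M. real (card {F\<in>S. U \<subseteq> F}))"
      unfolding g_def by (simp only: of_nat_sum)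
    also have "\<dots> = (\<Sum>U\<in>Uset T M. Nprime q (t + 1) m1 \<nu>)"
    proof (rule sum.cong[OF refl])
      fix U assume U: "U \<in> Uset T M"
      have "{F\<in>S. U \<subseteq> F} = {F\<in>Pm f m1. U \<subseteq> F}" using U by (auto simp: S_def Uset_def)
      then show "real (card {F\<in>S. U \<subseteq> F}) = Nprime q (t + 1) m1 \<nu>"
        using count_N[OF Uset_Pm[OF U] m1] by (simp add: q_def)
    qed
    finally show ?thesis by simp
  qed
  have sh: "(\<Sum>F\<in>S. h F) = real (card (Wset T M)) * Nprime q (t + 2) m1 \<nu>"
  proof -
    have "(\<Sum>F\<in>S. card {W\<in>Wset T M. W \<subseteq> F}) = (\<Sum>W\<in>Wset T M. card {F\<in>S. W \<subseteq> F})"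
      using sum.swap_restrict[of S "Wset T M" "\<lambda>_ _. (1::nat)" "\<lambda>F W. W \<subseteq> F"] by simp
    then have "real (\<Sum>F\<in>S. card {W\<in>Wset T M. W \<subseteq> F}) = real (\<Sum>W\<in>Wset T M. card {F\<in>S. W \<subseteq> F})" by (rule arg_cong)
    then have "(\<Sum>F\<in>S. h F) = (\<Sum>W\<in>Wset T M. real (card {F\<in>S. W \<subseteq> F}))"
      unfolding h_def by (simp only: of_nat_sum)
    also have "\<dots> = (\<Sum>W\<in>Wset T M. Nprime q (t + 2) m1 \<nu>)"
    proof (rule sum.cong[OF refl])
      fix W assume W: "W \<in> Wset T M"
      have "{F\<in>S. W \<subseteq> F} = {F\<in>Pm f m1. W \<subseteq> F}" using W by (auto simp: S_def Wset_def)
      then show "real (card {F\<in>S. W \<subseteq> F}) = Nprime q (t + 2) m1 \<nu>"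
        using count_N[OF Wset_Pm[OF W] m1] by (simp add: q_def)
    qed
    finally show ?thesis by simp
  qed
  have g1: "gbinom q (s - t) 1 = real (card (Uset T M))"
    using Uset_count by (simp add: gbinom_def q_def)
  have g2: "gbinom q (s - t) 2 = real (card (Wset T M))"
    using Wset_count by (simp add: q_def)
  show ?thesis using l unfolding sg sh g1[symmetric] g2[symmetric] q_def by (simp add: mult_ac)
qed

end

end




lemma ineq_core:
  fixes q :: real
  assumes q: "q \<ge> 2" and a: "1 \<le> a" and n: "1 \<le> n" and E: "2 * n + a + 1 \<le> E"
  shows "q ^ 3 * (q ^ n - 1) * (q ^ (n - 1) - 1) * (q ^ a - 1) \<le> (q ^ E - 1) * ((q ^ 2 - 1) * (q - 1))"
proof -
  have p: "\<And>k. 0 \<le> q ^ k - 1" using q by (simp add: one_le_power)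
  have "q ^ 3 * (q ^ n - 1) * (q ^ (n - 1) - 1) * (q ^ a - 1) \<le> q ^ 3 * q ^ n * q ^ (n - 1) * q ^ a"
    using q p by (intro mult_mono) auto
  also have "\<dots> = q ^ (2 * n + a + 2)" using n by (simp flip: power_add)
  also have "\<dots> \<le> q ^ (E + 1)" using q E a n by (intro power_increasing) auto
  also have "\<dots> \<le> (q ^ E - 1) * (q + 1)"
  proof -
    have "q ^ E \<ge> q ^ 2" using q E a n by (intro power_increasing) auto
    moreover have "q ^ 2 \<ge> q + 1"
    proof -
      have "q * q \<ge> 2 * q" using q by (intro mult_right_mono) auto
      then show ?thesis using q unfolding power2_eq_square by linarith
    qed
    ultimately show ?thesis by (simp add: algebra_simps)
  qed
  also have "\<dots> \<le> (q ^ E - 1) * ((q ^ 2 - 1) * (q - 1))"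
  proof (rule mult_left_mono[OF _ p])
    have e: "(q ^ 2 - 1) * (q - 1) = (q + 1) * ((q - 1) * (q - 1))" by (simp add: algebra_simps power2_eq_square)
    moreover have "(q - 1) * (q - 1) \<ge> 1 * 1" using q by (intro mult_mono) auto
    moreover have m: "(q + 1) * 1 \<le> (q + 1) * ((q - 1) * (q - 1))"
      using \<open>(q - 1) * (q - 1) \<ge> 1 * 1\<close> q by (intro mult_left_mono) auto
    show "q + 1 \<le> (q ^ 2 - 1) * (q - 1)" unfolding e using m by simp
  qed
  finally show ?thesis .
qed

lemma frac_abs:
  fixes q A B C X Q2 :: real
  assumes q: "q > 1" and Q2: "Q2 > 1" and C: "C > 1"
    and core: "q * Q2 * (A - 1) * (B - 1) * (C - 1) \<le> (X - 1) * ((Q2 - 1) * (q - 1))"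
  shows "q * ((A - 1) / (Q2 - 1) * ((B - 1) / (q - 1))) \<le> inverse Q2 * ((X - 1) / (C - 1))"
proof -
  have d1: "(Q2 - 1) * (q - 1) > 0" using q Q2 by simp
  have d2: "Q2 * (C - 1) > 0" using Q2 C by simp
  have L: "q * ((A - 1) / (Q2 - 1) * ((B - 1) / (q - 1))) = (q * (A - 1) * (B - 1)) / ((Q2 - 1) * (q - 1))"
    by simp
  have R: "inverse Q2 * ((X - 1) / (C - 1)) = (X - 1) / (Q2 * (C - 1))"
    by (simp add: inverse_eq_divide)
  have "(q * (A - 1) * (B - 1)) * (Q2 * (C - 1)) \<le> (X - 1) * ((Q2 - 1) * (q - 1))"
    using core by (simp add: mult_ac)
  then have "(q * (A - 1) * (B - 1)) / ((Q2 - 1) * (q - 1)) \<le> (X - 1) / (Q2 * (C - 1))"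
    using d1 d2 by (simp add: divide_le_eq le_divide_eq mult_ac)
  then show ?thesis unfolding L R .
qed

lemma ineq_part2:
  fixes q :: real
  assumes q: "q \<ge> 2" and a: "1 \<le> a" and n: "1 \<le> n" and E: "2 * n + a + 1 \<le> E"
  shows "q * ((q ^ n - 1) / (q ^ 2 - 1) * ((q ^ (n - 1) - 1) / (q - 1))) \<le> inverse (q ^ 2) * ((q ^ E - 1) / (q ^ a - 1))"
proof (rule frac_abs)
  show "q > 1" "q ^ 2 > 1" "q ^ a > 1" using q a by (auto simp: one_less_power)
  have "q * q ^ 2 = q ^ 3" by (simp add: power3_eq_cube power2_eq_square)
  then show "q * q ^ 2 * (q ^ n - 1) * (q ^ (n - 1) - 1) * (q ^ a - 1) \<le> (q ^ E - 1) * ((q ^ 2 - 1) * (q - 1))"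
    using ineq_core[OF q a n E] by simp
qed




theorem lemma4p1:
  fixes f :: "'a::{finite,field}^'n \<Rightarrow> 'a^'n \<Rightarrow> 'a"
    and \<nu> m1 m2 t :: nat and M T :: "('a^'n) set"
  defines "q \<equiv> real CARD('a)"
  assumes dimV: "CARD('n) = 2 * \<nu>"
    and f: "alt_bilinear f" "nondegenerate f"
    and t: "t \<ge> 1"
    and m1: "\<nu> > m1" "m1 \<ge> t + 1"
    and m2: "\<nu> > m2" "m2 \<ge> t + 1"
    and M: "M \<in> Pm f (m2 + 1)"
    and T: "vec.subspace T" "T \<subseteq> M" "vec.dim T = t"
  shows "real (card (C1 f M T m1 t) * card (C2 f M T m2))
           > s0 q \<nu> m1 (m2 + 1) t * Nprime q t m2 \<nu>
       \<and> (2 * \<nu> \<ge> m1 + 2 * m2 - t + 4 \<longrightarrow>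
           real (card (C1 f M T m1 t) * card (C2 f M T m2))
           > (gbinom q (m2 - t + 1) 1 - q powi (-2)) * Nprime q (t + 1) m1 \<nu> * Nprime q t m2 \<nu>)"
proof -
  note ab = f(1) and nd = f(2)
  have q2: "q \<ge> 2" using card_field_ge2[where 'a='a] by (simp add: q_def)
  have Mt: "totally_isotropic f M" and dM: "vec.dim M = m2 + 1" using M by (auto simp: Pm_def)
  have Ms: "vec.subspace M" using Mt by (simp add: totally_isotropic_def)
  have cM: "card M = CARD('a) ^ (m2 + 1)" using card_subspace[OF Ms] dM by simp
  have cT: "card T = CARD('a) ^ t" using card_subspace[OF T(1)] T(3) by simp
  have ts: "t + 2 \<le> m2 + 1" using m2 by simp
  have Tt: "totally_isotropic f T" using Mt T by (auto simp: totally_isotropic_def)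
  have TP: "T \<in> Pm f t" using Tt T(3) by (simp add: Pm_def)
  define c1 where "c1 = real (card (C1 f M T m1 t))"
  define c2 where "c2 = real (card (C2 f M T m2))"
  define N2 where "N2 = Nprime q t m2 \<nu>"
  have low: "c1 \<ge> s0 q \<nu> m1 (m2 + 1) t"
    using C1_lower[OF ab nd dimV T(1) Mt T(2) cT cM ts, of m1] m1
    unfolding c1_def s0_def q_def by simp
  define S2 where "S2 = {F\<in>Pm f m2. T \<subseteq> F}"
  have N2eq: "real (card S2) = N2"
    using count_N[OF ab nd dimV TP, of m2] m2 unfolding S2_def N2_def q_def by simp
  obtain H where H: "H \<in> subspaces_of M m2" "\<not> T \<subseteq> H"
    using hyperplane_exists[OF Ms _ T(1) T(2)] dM T(3) t by auto
  have "card (insert H S2) \<le> card (C2 f M T m2)"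
    using H by (intro card_mono) (auto simp: C2_def S2_def)
  moreover have "H \<notin> S2" using H by (auto simp: S2_def)
  ultimately have c2ge: "c2 \<ge> N2 + 1" using N2eq unfolding c2_def by simp
  have N2nn: "N2 \<ge> 0" using N2eq by (metis of_nat_0_le_iff)
  have c1pos: "c1 > 0"
  proof -
    have "real (card (Uset T M)) = (q ^ (m2 + 1 - t) - 1) / (q - 1)"
      using Uset_count[OF ab nd dimV T(1) Mt T(2) cT cM ts] by (simp add: q_def)
    moreover have "q ^ (m2 + 1 - t) > 1" using q2 m2 by (intro one_less_power) auto
    moreover have "q - 1 > 0" using q2 by simp
    ultimately have "real (card (Uset T M)) > 0" by simp
    then have "card (Uset T M) > 0" by (simp only: of_nat_0_less_iff)
    then obtain U where U: "U \<in> Uset T M" by (auto simp: card_gt_0_iff)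
    have UP: "U \<in> Pm f (Suc t)" by (rule Uset_Pm[OF ab nd dimV T(1) Mt T(2) cT cM ts U])
    have "real (card {F\<in>Pm f m1. U \<subseteq> F}) = Nprime q (Suc t) m1 \<nu>"
      using count_N[OF ab nd dimV UP, of m1] m1 by (simp add: q_def)
    moreover have "Nprime q (Suc t) m1 \<nu> > 0" using q2 m1 by (intro Nprime_pos) auto
    ultimately have "card {F\<in>Pm f m1. U \<subseteq> F} > 0" by simp
    then obtain F where F: "F \<in> Pm f m1" "U \<subseteq> F" by (auto simp: card_gt_0_iff)
    have Up: "vec.subspace U" "T \<subseteq> U" "U \<subseteq> M" "card U = CARD('a) * card T" using U by (auto simp: Uset_def)
    have "vec.dim U = t + 1" using dim_iff_card[OF Up(1)] Up(4) cT by simp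
    moreover have "vec.dim U \<le> vec.dim (F \<inter> M)" using F Up by (intro vec.dim_subset) auto
    ultimately have "F \<in> C1 f M T m1 t" using F Up by (auto simp: C1_def)
    then have "card (C1 f M T m1 t) > 0" by (auto simp: card_gt_0_iff)
    then show ?thesis by (simp add: c1_def)
  qed
  have main: "c1 * c2 > c1 * N2"
  proof -
    have "c1 * c2 \<ge> c1 * (N2 + 1)" using c2ge c1pos by (intro mult_left_mono) auto
    moreover have "c1 * (N2 + 1) = c1 * N2 + c1" by (simp add: algebra_simps)
    ultimately show ?thesis using c1pos by linarith
  qed
  have part1: "c1 * c2 > s0 q \<nu> m1 (m2 + 1) t * N2"
  proof -
    have "s0 q \<nu> m1 (m2 + 1) t * N2 \<le> c1 * N2" using low N2nn by (intro mult_right_mono) auto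
    then show ?thesis using main by simp
  qed
  have part2: "2 * \<nu> \<ge> m1 + 2 * m2 - t + 4 \<Longrightarrow>
     c1 * c2 > (gbinom q (m2 - t + 1) 1 - q powi (-2)) * Nprime q (t + 1) m1 \<nu> * N2"
  proof -
    assume hyp: "2 * \<nu> \<ge> m1 + 2 * m2 - t + 4"
    define N1 where "N1 = Nprime q (t + 1) m1 \<nu>"
    define N1' where "N1' = Nprime q (t + 2) m1 \<nu>"
    define n where "n = m2 + 1 - t"
    have nn: "m2 - t + 1 = n" using m2 by (simp add: n_def)
    have s0e: "s0 q \<nu> m1 (m2 + 1) t = gbinom q n 1 * N1 - q * gbinom q n 2 * N1'"
      by (simp add: s0_def n_def N1_def N1'_def)
    have pw: "q powi (-2) = inverse (q ^ 2)" by (simp add: power_int_minus)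
    have key: "q * gbinom q n 2 * N1' \<le> inverse (q ^ 2) * N1"
    proof (cases "m1 = t + 1")
      case True
      then have "N1' = 0" by (simp add: N1'_def Nprime_def)
      moreover have "N1 \<ge> 0" unfolding N1_def using Nprime_pos[of q "t+1" m1 \<nu>] q2 m1 by simp
      ultimately show ?thesis by simp
    next
      case False
      then have lt: "t + 1 < m1" using m1 by simp
      have N1e: "N1 = N1' * ((q ^ (2 * (\<nu> - (t + 1))) - 1) / (q ^ (m1 - (t + 1)) - 1))"
        using Nprime_step[OF ab nd dimV lt, of q] m1 by (simp add: N1_def N1'_def)
      have N1'nn: "N1' \<ge> 0" unfolding N1'_def using Nprime_pos[of q "t+2" m1 \<nu>] q2 m1 lt by simp
      have g2: "gbinom q n 2 = (q ^ n - 1) / (q ^ 2 - 1) * ((q ^ (n - 1) - 1) / (q - 1))"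
        by (simp add: gbinom_def numeral_2_eq_2)
      have E: "2 * n + (m1 - (t + 1)) + 1 \<le> 2 * (\<nu> - (t + 1))" using hyp m1 m2 lt by (simp add: n_def)
      have "q * gbinom q n 2 \<le> inverse (q ^ 2) * ((q ^ (2 * (\<nu> - (t + 1))) - 1) / (q ^ (m1 - (t + 1)) - 1))"
        unfolding g2 by (rule ineq_part2[OF q2 _ _ E]) (use lt m2 in \<open>auto simp: n_def\<close>)
      then have "q * gbinom q n 2 * N1' \<le> inverse (q ^ 2) * ((q ^ (2 * (\<nu> - (t + 1))) - 1) / (q ^ (m1 - (t + 1)) - 1)) * N1'"
        using N1'nn by (intro mult_right_mono) auto
      then show ?thesis unfolding N1e by (simp add: mult_ac)
    qed
    have "(gbinom q (m2 - t + 1) 1 - q powi (-2)) * N1 \<le> s0 q \<nu> m1 (m2 + 1) t"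
      unfolding nn s0e pw using key by (simp add: algebra_simps)
    then have "(gbinom q (m2 - t + 1) 1 - q powi (-2)) * N1 * N2 \<le> s0 q \<nu> m1 (m2 + 1) t * N2"
      using N2nn by (intro mult_right_mono) auto
    also have "\<dots> \<le> c1 * N2" using low N2nn by (intro mult_right_mono) auto
    also have "\<dots> < c1 * c2" by (rule main)
    finally show ?thesis by (simp add: N1_def)
  qed
  show ?thesis using part1 part2 unfolding c1_def c2_def N2_def by simp
qed


end
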